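(* For any finite alphabet $\mathfrak{G}$ and any $\mathfrak{G}$-trees $\mathfrak{s}$, $\mathfrak{t}$ such that $\mathfrak{s}\preceq\mathfrak{t}$, the interval $[\mathfrak{s},\mathfrak{t}]$ of the $\mathfrak{G}$-prefix poset is isomorphic as a lattice to $J(P_s)$, where $s := \mathrm{sh}(\lozenge_{|\mathfrak{s}|}[\mathfrak{t}\setminus\mathfrak{s}])$.
   Context: $\mathfrak{G}$ is a finite alphabet (letters with arities $\geq 1$). A $\mathfrak{G}$-tree is either the leaf (the tree with no internal node) or a root decorated by a letter $\mathtt{a}\in\mathfrak{G}$ with $|\mathtt{a}|$ children that are $\mathfrak{G}$-trees; $|\mathfrak{s}|$ is the number of leaves. The $\mathfrak{G}$-prefix poset is the set of $\mathfrak{G}$-trees ordered by $\mathfrak{s}\preceq\mathfrak{t}$ iff $\mathfrak{t}$ is obtained by grafting $\mathfrak{G}$-trees $\mathfrak{r}_1,\dots,\mathfrak{r}_{|\mathfrak{s}|}$ onto the leaves of $\mathfrak{s}$ (left to right); then $\mathfrak{t}\setminus\mathfrak{s} := (\mathfrak{r}_1,\dots,\mathfrak{r}_{|\mathfrak{s}|})$, and its intervals are lattices (with meet = largest common part from the root and join = superimposition). $\lozenge_k[\mathfrak{r}_1,\dots,\mathfrak{r}_k]$ is the tree with root decorated by a new letter $\lozenge_k$ of arity $k$ and children $\mathfrak{r}_1,\dots,\mathfrak{r}_k$. A shadow is a finite (possibly empty) multiset of shadows, i.e. a nonplanar undecorated rooted tree. For a tree $\mathfrak{t}$ different from the leaf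 with root of arity $k$, $\mathrm{sh}(\mathfrak{t})$ is the multiset of the $\mathrm{sh}(\mathfrak{t}(i))$ over those $i\in[k]$ such that the $i$-th subtree $\mathfrak{t}(i)$ is not the leaf. For a shadow $s$, $P_s$ is the poset on the nodes of $s$ other than its root, where $u<v$ iff $u$ is an ancestor of $v$. For a poset $P$, $J(P)$ is the lattice of order ideals (down-closed subsets) of $P$ ordered by inclusion, with intersection and union as meet and join. *)

theory Defs
  imports Main "HOL-Library.Multiset"
begin

datatype 'a tree = Leaf | Node 'a "'a tree list"

fun gtree :: "'a set \<Rightarrow> ('a \<Rightarrow> nat) \<Rightarrow> 'a tree \<Rightarrow> bool" where
  "gtree G ar Leaf = True"
| "gtree G ar (Node a ts) =
     (a \<in> G \<and> length ts = ar a \<and> (\<forall>c\<in>set ts. gtree G ar c))"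

fun nleaves :: "'a tree \<Rightarrow> nat" where
  "nleaves Leaf = 1"
| "nleaves (Node a ts) = sum_list (map nleaves ts)"

fun graft :: "'a tree \<Rightarrow> 'a tree list \<Rightarrow> 'a tree"
and graft_list :: "'a tree list \<Rightarrow> 'a tree list \<Rightarrow> 'a tree list" where
  "graft Leaf rs = hd rs"
| "graft (Node a ts) rs = Node a (graft_list ts rs)"
| "graft_list [] rs = []"
| "graft_list (t # ts) rs =
     graft t (take (nleaves t) rs) # graft_list ts (drop (nleaves t) rs)"

definition gprefix :: "'a set \<Rightarrow> ('a \<Rightarrow> nat) \<Rightarrow> 'a tree \<Rightarrow> 'a tree \<Rightarrow> bool" where
  "gprefix G ar s t \<longleftrightarrow>
     (\<exists>rs. length rs = nleaves s \<and> (\<forall>r\<in>set rs. gtree G ar r) \<and> t = graft s rs)"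

definition tree_diff :: "'a tree \<Rightarrow> 'a tree \<Rightarrow> 'a tree list" where
  "tree_diff t s = (THE rs. length rs = nleaves s \<and> t = graft s rs)"

function tmeet :: "'a tree \<Rightarrow> 'a tree \<Rightarrow> 'a tree" where
  "tmeet (Node a ts) (Node b us) =
     (if a = b \<and> length ts = length us
      then Node a (map (\<lambda>(x, y). tmeet x y) (zip ts us)) else Leaf)"
| "tmeet Leaf u = Leaf"
| "tmeet (Node a ts) Leaf = Leaf"
  by pat_completeness auto
termination
  by (relation "measure (\<lambda>(x, y). size x)")
     (auto dest!: set_zip_leftD simp: less_Suc_eq_le intro: size_list_estimation')

function tjoin :: "'a tree \<Rightarrow> 'a tree \<Rightarrow> 'a tree" where
  "tjoin Leaf u = u"
| "tjoin (Node a ts) Leaf = Node a ts"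
| "tjoin (Node a ts) (Node b us) = Node a (map (\<lambda>(x, y). tjoin x y) (zip ts us))"
  by pat_completeness auto
termination
  by (relation "measure (\<lambda>(x, y). size x)")
     (auto dest!: set_zip_leftD simp: less_Suc_eq_le intro: size_list_estimation')

text \<open>A shadow is a finite multiset of shadows (nonplanar undecorated rooted tree).\<close>
datatype shadow = Sh "shadow multiset"

fun sh :: "'b tree \<Rightarrow> shadow" where
  "sh Leaf = Sh {#}"
| "sh (Node a ts) = Sh (mset (map sh (filter (\<lambda>c. c \<noteq> Leaf) ts)))"

text \<open>The tree with root a new letter \<lozenge>_k (here None) and children rs.\<close>
definition diamond :: "'a tree list \<Rightarrow> 'a option tree" where
  "diamond rs = Node None (map (map_tree Some) rs)"

text \<open>Nodes of a shadow, as paths from the root; a step chooses a child subtree c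
  together with an index i < multiplicity of c, to distinguish equal copies.
  The root is the empty path.\<close>
inductive shadow_node :: "shadow \<Rightarrow> (shadow \<times> nat) list \<Rightarrow> bool" where
  root: "shadow_node s []"
| child: "c \<in># M \<Longrightarrow> i < count M c \<Longrightarrow> shadow_node c p \<Longrightarrow> shadow_node (Sh M) ((c, i) # p)"

text \<open>Carrier of P_s: nodes other than the root.  Order: u \<le> v iff u is an
  ancestor of v or u = v.\<close>
definition Ps_carrier :: "shadow \<Rightarrow> (shadow \<times> nat) list set" where
  "Ps_carrier s = {p. shadow_node s p \<and> p \<noteq> []}"

definition Ps_le :: "(shadow \<times> nat) list \<Rightarrow> (shadow \<times> nat) list \<Rightarrow> bool" where
  "Ps_le u v \<longleftrightarrow> (\<exists>q. v = u @ q)"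

definition order_ideals :: "'c set \<Rightarrow> ('c \<Rightarrow> 'c \<Rightarrow> bool) \<Rightarrow> 'c set set" where
  "order_ideals A le = {I. I \<subseteq> A \<and> (\<forall>x\<in>I. \<forall>y\<in>A. le y x \<longrightarrow> y \<in> I)}"

end

theory Submission
  imports Defs
begin


function pre :: "'a tree \<Rightarrow> 'a tree \<Rightarrow> bool" where
  "pre Leaf t = True"
| "pre (Node a us) Leaf = False"
| "pre (Node a us) (Node b ts) = (a = b \<and> length us = length ts \<and> (\<forall>(x,y)\<in>set (zip us ts). pre x y))"
  by pat_completeness auto
termination
  by (relation "measure (\<lambda>(x, y). size x)")
     (auto dest!: set_zip_leftD simp: less_Suc_eq_le intro: size_list_estimation')

lemma pre_Node[simp]: "pre (Node a us) (Node b ts) \<longleftrightarrow> a = b \<and> list_all2 pre us ts"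
  by (simp add: list_all2_iff)

declare pre.simps(3)[simp del]

fun tcut :: "'a tree \<Rightarrow> 'a tree \<Rightarrow> 'a tree list"
and cut_list :: "'a tree list \<Rightarrow> 'a tree list \<Rightarrow> 'a tree list" where
  "tcut Leaf t = [t]"
| "tcut (Node a ss) Leaf = []"
| "tcut (Node a ss) (Node b ts) = cut_list ss ts"
| "cut_list [] ts = []"
| "cut_list (s # ss) [] = []"
| "cut_list (s # ss) (t # ts) = tcut s t @ cut_list ss ts"

inductive isnode :: "'a tree \<Rightarrow> nat list \<Rightarrow> bool" where
  "isnode (Node a ts) []"
| "i < length ts \<Longrightarrow> isnode (ts ! i) p \<Longrightarrow> isnode (Node a ts) (i # p)"

lemma isnode_Leaf[simp]: "\<not> isnode Leaf p"
  by (auto elim: isnode.cases)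
lemma isnode_Nil[simp]: "isnode (Node a ts) []"
  by (rule isnode.intros)
lemma isnode_Cons[simp]: "isnode (Node a ts) (i # p) \<longleftrightarrow> i < length ts \<and> isnode (ts ! i) p"
  by (auto elim: isnode.cases intro: isnode.intros)
lemma isnode_Nil_iff: "isnode t [] \<longleftrightarrow> t \<noteq> Leaf"
  by (cases t) auto

definition inodes :: "'a tree \<Rightarrow> nat list set" where
  "inodes t = {p. isnode t p}"

lemma isnode_prefix: "isnode t (p @ q) \<Longrightarrow> isnode t p"
proof (induction p arbitrary: t)
  case Nil then show ?case by (cases t) auto
next
  case (Cons i p)
  obtain a ts where t: "t = Node a ts" using Cons.prems by (cases t) auto
  with Cons.prems have "i < length ts" "isnode (ts ! i) (p @ q)" by auto
  with Cons.IH t show ?case by auto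
qed

function restrict :: "'a tree \<Rightarrow> nat list set \<Rightarrow> 'a tree" where
  "restrict Leaf S = Leaf"
| "restrict (Node a ts) S = (if [] \<in> S then Node a (map (\<lambda>(i, c). restrict c {p. i # p \<in> S}) (zip [0..<length ts] ts)) else Leaf)"
  by pat_completeness auto
termination
  by (relation "measure (\<lambda>(x, y). size x)")
     (auto dest!: set_zip_rightD simp: less_Suc_eq_le intro: size_list_estimation')

lemma pre_refl: "pre t t"
  by (induction t) (auto simp: list_all2_conv_all_nth)

lemma pre_inodes: "pre u v \<Longrightarrow> isnode u p \<Longrightarrow> isnode v p"
proof (induction u v arbitrary: p rule: pre.induct)
  case (3 a us b ts)
  show ?case
  proof (cases p)
    case (Cons i q)
    with 3(2,3) have i: "i < length us" "isnode (us ! i) q" "length us = length ts" "pre (us!i) (ts!i)"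
      by (auto simp: list_all2_conv_all_nth)
    have "(us!i, ts!i) \<in> set (zip us ts)" using i by (metis in_set_zip fst_conv snd_conv)
    with 3(1) 3(2) i have "isnode (ts!i) q" by (auto simp: pre.simps(3))
    with i Cons 3(2) show ?thesis by auto
  qed (use 3 in auto)
qed auto

lemma cut_length:
  fixes s t :: "'a tree" and ss ts rs :: "'a tree list"
  shows
  "pre s t \<Longrightarrow> length (tcut s t) = nleaves s"
  "list_all2 pre ss ts \<Longrightarrow> length (cut_list ss ts) = sum_list (map nleaves ss)"
  by (induction s t and ss ts rule: tcut_cut_list.induct) auto

lemma graft_cut:
  fixes s t :: "'a tree" and ss ts rs :: "'a tree list"
  shows
  "pre s t \<Longrightarrow> graft s (tcut s t) = t"
  "list_all2 pre ss ts \<Longrightarrow> graft_list ss (cut_list ss ts) = ts"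
  by (induction s t and ss ts rule: tcut_cut_list.induct) (auto simp: cut_length)

lemma cut_graft:
  fixes s t :: "'a tree" and ss ts rs :: "'a tree list"
  shows
  "length rs = nleaves s \<Longrightarrow> tcut s (graft s rs) = rs"
  "length rs = sum_list (map nleaves ss) \<Longrightarrow> cut_list ss (graft_list ss rs) = rs"
proof (induction s rs and ss rs rule: graft_graft_list.induct)
  case (1 rs)
  then show ?case by (cases rs) auto
next
  case (4 t ts rs)
  then show ?case by (cases "graft t (take (nleaves t) rs)") (auto simp: min_def)
qed auto

lemma pre_graft:
  fixes s t :: "'a tree" and ss ts rs :: "'a tree list"
  shows
  "length rs = nleaves s \<Longrightarrow> pre s (graft s rs)"
  "length rs = sum_list (map nleaves ss) \<Longrightarrow> list_all2 pre ss (graft_list ss rs)"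
proof (induction s rs and ss rs rule: graft_graft_list.induct)
  case (4 t ts rs)
  then show ?case by (auto simp: min_def)
qed auto

lemma gtree_cut:
  fixes s t :: "'a tree" and ss ts rs :: "'a tree list"
  shows
  "pre s t \<Longrightarrow> gtree G ar t \<Longrightarrow> \<forall>r\<in>set (tcut s t). gtree G ar r"
  "list_all2 pre ss ts \<Longrightarrow> \<forall>t\<in>set ts. gtree G ar t \<Longrightarrow> \<forall>r\<in>set (cut_list ss ts). gtree G ar r"
  by (induction s t and ss ts rule: tcut_cut_list.induct) auto

lemma gtree_pre: "pre u t \<Longrightarrow> gtree G ar t \<Longrightarrow> gtree G ar u"
proof (induction u t rule: pre.induct)
  case (3 a us b ts)
  have "gtree G ar c" if "c \<in> set us" for c
  proof -
    from that obtain n where n: "n < length us" "c = us ! n" by (auto simp: in_set_conv_nth)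
    from 3(2) have l: "length us = length ts" and p: "\<forall>(x,y)\<in>set (zip us ts). pre x y" by (auto simp: list_all2_iff)
    have z: "(us!n, ts!n) \<in> set (zip us ts)" using n l by (metis in_set_zip fst_conv snd_conv)
    have "gtree G ar (ts!n)" using 3(3) n l by auto
    with 3(1)[OF z refl] p z n show ?thesis by auto
  qed
  moreover have "length us = length ts" "a = b" using 3(2) by (auto simp: list_all2_iff)
  ultimately show ?case using 3(3) by auto
qed auto

lemma gprefix_pre: "gprefix G ar u t \<Longrightarrow> pre u t"
  unfolding gprefix_def using pre_graft(1) by blast

lemma pre_gprefix: "pre u t \<Longrightarrow> gtree G ar t \<Longrightarrow> gprefix G ar u t"
  unfolding gprefix_def using cut_length(1) graft_cut(1) gtree_cut(1) by metis

lemma tree_diff_cut: "pre s t \<Longrightarrow> tree_diff t s = tcut s t"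
  unfolding tree_diff_def
  by (rule the_equality) (auto simp: cut_length graft_cut cut_graft)

lemma nth_zip_map: "i < length xs \<Longrightarrow> i < length ys \<Longrightarrow> map (\<lambda>(x, y). f x y) (zip xs ys) ! i = f (xs ! i) (ys ! i)"
  by simp

lemma pre_of_inodes:
  "pre u t \<Longrightarrow> pre v t \<Longrightarrow> (\<forall>p. isnode u p \<longrightarrow> isnode v p) \<Longrightarrow> pre u v"
proof (induction t arbitrary: u v)
  case Leaf
  then show ?case by (cases u) auto
next
  case (Node b ts)
  show ?case
  proof (cases u)
    case (Node a us)
    with Node.prems have u: "a = b" "list_all2 pre us ts" by auto
    from Node.prems(3) Node have "isnode v []" by auto
    then obtain c vs where v: "v = Node c vs" by (cases v) auto
    with Node.prems have v2: "c = b" "list_all2 pre vs ts" by auto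
    have "pre (us ! i) (vs ! i)" if i: "i < length us" for i
    proof -
      have l: "length us = length ts" "length vs = length ts" using u v2 by (auto simp: list_all2_lengthD)
      have "ts ! i \<in> set ts" using i l by auto
      moreover have "pre (us!i) (ts!i)" "pre (vs!i) (ts!i)" using u v2 i l by (auto simp: list_all2_conv_all_nth)
      moreover have "\<forall>p. isnode (us!i) p \<longrightarrow> isnode (vs!i) p"
        using Node.prems(3) \<open>u = Node a us\<close> v i l by (metis isnode_Cons)
      ultimately show ?thesis using Node.IH by blast
    qed
    then show ?thesis using \<open>u = Node a us\<close> v u v2
      by (auto simp: list_all2_conv_all_nth)
  qed simp
qed

lemma tmeet_pre:
  "pre x t \<Longrightarrow> pre y t \<Longrightarrow> pre (tmeet x y) t \<and> (\<forall>p. isnode (tmeet x y) p \<longleftrightarrow> isnode x p \<and> isnode y p)"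
proof (induction t arbitrary: x y)
  case Leaf
  then show ?case by (cases x) auto
next
  case (Node b ts)
  show ?case
  proof (cases x)
    case Leaf then show ?thesis by auto
  next
    case (Node a xs)
    show ?thesis
    proof (cases y)
      case Leaf then show ?thesis using \<open>x = Node a xs\<close> by (auto simp: isnode_Nil_iff)
    next
      case (Node c ys)
      from Node.prems \<open>x = Node a xs\<close> Node have
        h: "a = b" "c = b" "length xs = length ts" "length ys = length ts"
           "\<forall>i<length ts. pre (xs!i) (ts!i) \<and> pre (ys!i) (ts!i)"
        by (auto simp: list_all2_conv_all_nth)
      have m: "tmeet x y = Node b (map (\<lambda>(x, y). tmeet x y) (zip xs ys))"
        using \<open>x = Node a xs\<close> Node h by simp
      have IH: "pre (tmeet (xs!i) (ys!i)) (ts!i) \<and> (\<forall>p. isnode (tmeet (xs!i) (ys!i)) p \<longleftrightarrow> isnode (xs!i) p \<and> isnode (ys!i) p)"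
        if "i < length ts" for i
        using Node.IH[of "ts!i" "xs!i" "ys!i"] h that by auto
      have "pre (tmeet x y) (Node b ts)"
        unfolding m using IH h by (auto simp: list_all2_conv_all_nth)
      moreover have "isnode (tmeet x y) p \<longleftrightarrow> isnode x p \<and> isnode y p" for p
        unfolding m using IH h \<open>x = Node a xs\<close> Node by (cases p) auto
      ultimately show ?thesis by blast
    qed
  qed
qed

lemma tjoin_pre:
  "pre x t \<Longrightarrow> pre y t \<Longrightarrow> pre (tjoin x y) t \<and> (\<forall>p. isnode (tjoin x y) p \<longleftrightarrow> isnode x p \<or> isnode y p)"
proof (induction t arbitrary: x y)
  case Leaf
  then show ?case by (cases x; cases y) auto
next
  case (Node b ts)
  show ?case
  proof (cases x)
    case Leaf then show ?thesis using Node.prems by auto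
  next
    case (Node a xs)
    show ?thesis
    proof (cases y)
      case Leaf then show ?thesis using \<open>x = Node a xs\<close> Node.prems by auto
    next
      case (Node c ys)
      from Node.prems \<open>x = Node a xs\<close> Node have
        h: "a = b" "c = b" "length xs = length ts" "length ys = length ts"
           "\<forall>i<length ts. pre (xs!i) (ts!i) \<and> pre (ys!i) (ts!i)"
        by (auto simp: list_all2_conv_all_nth)
      have m: "tjoin x y = Node b (map (\<lambda>(x, y). tjoin x y) (zip xs ys))"
        using \<open>x = Node a xs\<close> Node h by simp
      have IH: "pre (tjoin (xs!i) (ys!i)) (ts!i) \<and> (\<forall>p. isnode (tjoin (xs!i) (ys!i)) p \<longleftrightarrow> isnode (xs!i) p \<or> isnode (ys!i) p)"
        if "i < length ts" for i
        using Node.IH[of "ts!i" "xs!i" "ys!i"] h that by auto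
      have "pre (tjoin x y) (Node b ts)"
        unfolding m using IH h by (auto simp: list_all2_conv_all_nth)
      moreover have "isnode (tjoin x y) p \<longleftrightarrow> isnode x p \<or> isnode y p" for p
        unfolding m using IH h \<open>x = Node a xs\<close> Node by (cases p) auto
      ultimately show ?thesis by blast
    qed
  qed
qed

lemma restrict_inodes: "pre u t \<Longrightarrow> restrict t (inodes u) = u"
proof (induction u t rule: pre.induct)
  case (1 t)
  then show ?case by (cases t) (auto simp: inodes_def)
next
  case (3 a us b ts)
  from 3(2) have h: "a = b" "length us = length ts" "\<forall>(x,y)\<in>set (zip us ts). pre x y"
    by (auto simp: list_all2_iff)
  have "restrict (ts ! i) {p. i # p \<in> inodes (Node a us)} = us ! i" if i: "i < length ts" for i
  proof -
    have z: "(us!i, ts!i) \<in> set (zip us ts)" using i h by (metis in_set_zip fst_conv snd_conv)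
    have "{p. i # p \<in> inodes (Node a us)} = inodes (us ! i)" using i h by (auto simp: inodes_def)
    then show ?thesis using 3(1)[OF z refl] h z by auto
  qed
  then show ?case using h by (auto simp: inodes_def intro!: nth_equalityI)
qed auto

lemma restrict_pre:
  "S \<subseteq> inodes t \<Longrightarrow> (\<forall>p q. p @ q \<in> S \<longrightarrow> p \<in> S) \<Longrightarrow> pre (restrict t S) t \<and> inodes (restrict t S) = S"
proof (induction t arbitrary: S)
  case Leaf
  then show ?case by (auto simp: inodes_def)
next
  case (Node a ts)
  show ?case
  proof (cases "[] \<in> S")
    case False
    with Node.prems(2) have "S = {}" by (metis append_Nil empty_iff subsetI subset_antisym)
    then show ?thesis by (auto simp: inodes_def)
  next
    case True
    define Si where "Si i = {p. i # p \<in> S}" for i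
    have IH: "pre (restrict (ts!i) (Si i)) (ts!i) \<and> inodes (restrict (ts!i) (Si i)) = Si i" if i: "i < length ts" for i
    proof (rule Node.IH)
      show "ts ! i \<in> set ts" using i by simp
      show "Si i \<subseteq> inodes (ts ! i)" using Node.prems(1) i by (auto simp: Si_def inodes_def)
      show "\<forall>p q. p @ q \<in> Si i \<longrightarrow> p \<in> Si i" using Node.prems(2) by (auto simp: Si_def)
    qed
    have r: "restrict (Node a ts) S = Node a (map (\<lambda>i. restrict (ts!i) (Si i)) [0..<length ts])"
      using True by (auto simp: Si_def intro!: nth_equalityI)
    have "pre (restrict (Node a ts) S) (Node a ts)"
      unfolding r using IH by (auto simp: list_all2_conv_all_nth)
    moreover have "inodes (restrict (Node a ts) S) = S"
    proof -
      have "isnode (restrict (Node a ts) S) p \<longleftrightarrow> p \<in> S" for p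
      proof (cases p)
        case Nil then show ?thesis using True r by simp
      next
        case (Cons i q)
        have "i # q \<in> S \<Longrightarrow> i < length ts" using Node.prems(1) by (auto simp: inodes_def)
        moreover have "i < length ts \<Longrightarrow> isnode (restrict (ts!i) (Si i)) q \<longleftrightarrow> q \<in> Si i"
          using IH[of i] unfolding inodes_def by (metis mem_Collect_eq)
        ultimately show ?thesis unfolding r Cons by (auto simp: Si_def)
      qed
      then show ?thesis by (auto simp: inodes_def)
    qed
    ultimately show ?thesis by blast
  qed
qed




definition pfx :: "'x list \<Rightarrow> 'x list \<Rightarrow> bool" where
  "pfx u v \<longleftrightarrow> (\<exists>q. v = u @ q)"

lemma Ps_le_pfx: "Ps_le = pfx"
  by (auto simp: fun_eq_iff Ps_le_def pfx_def)

lemma pfx_Nil[simp]: "pfx [] v" by (simp add: pfx_def)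
lemma pfx_Nil2[simp]: "pfx u [] \<longleftrightarrow> u = []" by (simp add: pfx_def)
lemma pfx_Cons[simp]: "pfx (a # u) (b # v) \<longleftrightarrow> a = b \<and> pfx u v" by (auto simp: pfx_def)
lemma pfx_refl[simp]: "pfx u u" by (simp add: pfx_def)
lemma pfx_Cons_Nil[simp]: "\<not> pfx (a # u) []" by (simp add: pfx_def)

definition iso :: "'x list set \<Rightarrow> 'y list set \<Rightarrow> bool" where
  "iso A B \<longleftrightarrow> (\<exists>f. bij_betw f A B \<and> (\<forall>x\<in>A. \<forall>y\<in>A. pfx x y \<longleftrightarrow> pfx (f x) (f y)))"

lemma iso_map: "inj_on g A \<Longrightarrow> (\<forall>x\<in>A. \<forall>y\<in>A. pfx x y \<longleftrightarrow> pfx (g x) (g y)) \<Longrightarrow> iso A (g ` A)"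
  unfolding iso_def by (auto simp: bij_betw_def)

lemma iso_refl: "iso A A"
  using iso_map[of id A] by simp

lemma iso_sym: assumes "iso A B" shows "iso B A"
proof -
  from assms obtain f where f: "bij_betw f A B" "\<forall>x\<in>A. \<forall>y\<in>A. pfx x y \<longleftrightarrow> pfx (f x) (f y)"
    by (auto simp: iso_def)
  let ?g = "inv_into A f"
  have "bij_betw ?g B A" using f(1) by (rule bij_betw_inv_into)
  moreover have "\<forall>x\<in>B. \<forall>y\<in>B. pfx x y \<longleftrightarrow> pfx (?g x) (?g y)"
  proof (intro ballI)
    fix x y assume xy: "x \<in> B" "y \<in> B"
    have "?g x \<in> A" "?g y \<in> A" using xy f(1) by (auto simp: bij_betw_def inv_into_into)
    moreover have "f (?g x) = x" "f (?g y) = y" using xy f(1) by (auto simp: bij_betw_def f_inv_into_f)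
    ultimately show "pfx x y \<longleftrightarrow> pfx (?g x) (?g y)" using f(2) by metis
  qed
  ultimately show ?thesis by (auto simp: iso_def)
qed

lemma iso_trans: assumes "iso A B" "iso B C" shows "iso A C"
proof -
  from assms obtain f g where f: "bij_betw f A B" "\<forall>x\<in>A. \<forall>y\<in>A. pfx x y \<longleftrightarrow> pfx (f x) (f y)"
    and g: "bij_betw g B C" "\<forall>x\<in>B. \<forall>y\<in>B. pfx x y \<longleftrightarrow> pfx (g x) (g y)"
    by (auto simp: iso_def)
  have "bij_betw (g \<circ> f) A C" using f(1) g(1) by (rule bij_betw_trans)
  moreover have "\<forall>x\<in>A. \<forall>y\<in>A. pfx x y \<longleftrightarrow> pfx ((g \<circ> f) x) ((g \<circ> f) y)"
    using f g by (auto simp: bij_betw_def)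
  ultimately show ?thesis by (auto simp: iso_def)
qed

lemma iso_union:
  assumes "iso A1 B1" "iso A2 B2"
    and "\<forall>x\<in>A1. \<forall>y\<in>A2. \<not> pfx x y \<and> \<not> pfx y x"
    and "\<forall>x\<in>B1. \<forall>y\<in>B2. \<not> pfx x y \<and> \<not> pfx y x"
  shows "iso (A1 \<union> A2) (B1 \<union> B2)"
proof -
  from assms obtain f where f: "bij_betw f A1 B1" "\<forall>x\<in>A1. \<forall>y\<in>A1. pfx x y \<longleftrightarrow> pfx (f x) (f y)"
    by (auto simp: iso_def)
  from assms obtain g where g: "bij_betw g A2 B2" "\<forall>x\<in>A2. \<forall>y\<in>A2. pfx x y \<longleftrightarrow> pfx (g x) (g y)"
    by (auto simp: iso_def)
  have d1: "A1 \<inter> A2 = {}" using assms(3) by (metis disjoint_iff pfx_refl)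
  have d2: "B1 \<inter> B2 = {}" using assms(4) by (metis disjoint_iff pfx_refl)
  define h where "h x = (if x \<in> A1 then f x else g x)" for x
  have "bij_betw h A1 B1 \<longleftrightarrow> bij_betw f A1 B1" by (rule bij_betw_cong) (auto simp: h_def)
  with f(1) have "bij_betw h A1 B1" by simp
  moreover have "bij_betw h A2 B2 \<longleftrightarrow> bij_betw g A2 B2" by (rule bij_betw_cong) (use d1 in \<open>auto simp: h_def\<close>)
  with g(1) have "bij_betw h A2 B2" by simp
  ultimately have "bij_betw h (A1 \<union> A2) (B1 \<union> B2)" using d2 by (rule bij_betw_combine)
  moreover have "\<forall>x\<in>A1 \<union> A2. \<forall>y\<in>A1 \<union> A2. pfx x y \<longleftrightarrow> pfx (h x) (h y)"
  proof (intro ballI)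
    fix x y assume xy: "x \<in> A1 \<union> A2" "y \<in> A1 \<union> A2"
    have fx: "x \<in> A1 \<Longrightarrow> f x \<in> B1" "y \<in> A1 \<Longrightarrow> f y \<in> B1" using f(1) by (auto simp: bij_betw_def)
    have gx: "x \<in> A2 \<Longrightarrow> g x \<in> B2" "y \<in> A2 \<Longrightarrow> g y \<in> B2" using g(1) by (auto simp: bij_betw_def)
    show "pfx x y \<longleftrightarrow> pfx (h x) (h y)"
      using xy f(2) g(2) assms(3,4) d1 fx gx unfolding h_def by (cases "x \<in> A1"; cases "y \<in> A1") auto
  qed
  ultimately show ?thesis by (auto simp: iso_def)
qed

lemma iso_root:
  assumes "iso A B" "[] \<notin> A" "[] \<notin> B"
  shows "iso (insert [] A) (insert [] B)"
proof -
  from assms obtain f where f: "bij_betw f A B" "\<forall>x\<in>A. \<forall>y\<in>A. pfx x y \<longleftrightarrow> pfx (f x) (f y)"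
    by (auto simp: iso_def)
  define h where "h x = (if x = [] then [] else f x)" for x
  have "bij_betw h A B \<longleftrightarrow> bij_betw f A B" by (rule bij_betw_cong) (use assms(2) in \<open>auto simp: h_def\<close>)
  with f(1) have "bij_betw h A B" by simp
  moreover have "bij_betw h {[]} {[]}" by (simp add: h_def bij_betw_def)
  ultimately have "bij_betw h ({[]} \<union> A) ({[]} \<union> B)" using assms(3)
    by (intro bij_betw_combine) auto
  then have "bij_betw h (insert [] A) (insert [] B)" by simp
  moreover have "\<forall>x\<in>insert [] A. \<forall>y\<in>insert [] A. pfx x y \<longleftrightarrow> pfx (h x) (h y)"
  proof (intro ballI)
    fix x y assume xy: "x \<in> insert [] A" "y \<in> insert [] A"
    have "x \<in> A \<Longrightarrow> f x \<noteq> []" "y \<in> A \<Longrightarrow> f y \<noteq> []" using f(1) assms(3) by (auto simp: bij_betw_def image_iff, metis+)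
    then show "pfx x y \<longleftrightarrow> pfx (h x) (h y)"
      using xy f(2) assms(2) unfolding h_def by auto
  qed
  ultimately show ?thesis by (auto simp: iso_def)
qed

lemma iso_cons: "iso A ((#) a ` A)"
  by (rule iso_map) (auto simp: inj_on_def)

lemma iso_empty: "iso {} {}"
  by (auto simp: iso_def bij_betw_def)

definition Nd :: "shadow \<Rightarrow> (shadow \<times> nat) list set" where
  "Nd c = {q. shadow_node c q}"

definition SS :: "shadow multiset \<Rightarrow> (shadow \<times> nat) list set" where
  "SS M = Ps_carrier (Sh M)"

lemma sn_Nil[simp]: "shadow_node c []"
  by (rule shadow_node.root)

lemma sn_Cons[simp]: "shadow_node (Sh M) ((c, i) # q) \<longleftrightarrow> i < count M c \<and> shadow_node c q"
proof
  assume "shadow_node (Sh M) ((c, i) # q)"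
  then show "i < count M c \<and> shadow_node c q" by (cases rule: shadow_node.cases) auto
next
  assume h: "i < count M c \<and> shadow_node c q"
  then have "c \<in># M" by (metis count_greater_zero_iff gr_zeroI less_nat_zero_code)
  with h show "shadow_node (Sh M) ((c, i) # q)" by (intro shadow_node.child) auto
qed

lemma SS_mem: "x \<in> SS M \<longleftrightarrow> (\<exists>c i q. x = (c, i) # q \<and> i < count M c \<and> shadow_node c q)"
  unfolding SS_def Ps_carrier_def by (cases x) auto

lemma Nil_notin_SS[simp]: "[] \<notin> SS M"
  by (simp add: SS_mem)

lemma SS_empty: "SS {#} = {}"
  by (auto simp: SS_mem)

lemma SS_single: "SS {#c#} = (#) (c, 0) ` Nd c"
proof (intro equalityI subsetI)
  fix x assume "x \<in> SS {#c#}"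
  then obtain d i q where "x = (d, i) # q" "i < count {#c#} d" "shadow_node d q" by (auto simp: SS_mem)
  then have "d = c" "i = 0" by (auto split: if_splits)
  with \<open>x = (d, i) # q\<close> \<open>shadow_node d q\<close> show "x \<in> (#) (c, 0) ` Nd c" by (auto simp: Nd_def)
next
  fix x assume "x \<in> (#) (c, 0) ` Nd c"
  then show "x \<in> SS {#c#}" by (auto simp: SS_mem Nd_def)
qed

lemma Nd_Sh: "Nd (Sh M) = insert [] (SS M)"
  unfolding Nd_def SS_def Ps_carrier_def by auto

definition shiftm :: "shadow multiset \<Rightarrow> (shadow \<times> nat) list \<Rightarrow> (shadow \<times> nat) list" where
  "shiftm A x = (case x of [] \<Rightarrow> [] | (c, i) # q \<Rightarrow> (c, i + count A c) # q)"

lemma SS_plus_eq: "SS (A + B) = SS A \<union> shiftm A ` SS B"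
proof (intro equalityI subsetI)
  fix x assume "x \<in> SS (A + B)"
  then obtain c i q where x: "x = (c, i) # q" "i < count A c + count B c" "shadow_node c q"
    by (auto simp: SS_mem)
  show "x \<in> SS A \<union> shiftm A ` SS B"
  proof (cases "i < count A c")
    case True then show ?thesis using x by (auto simp: SS_mem)
  next
    case False
    then have "(c, i - count A c) # q \<in> SS B" "x = shiftm A ((c, i - count A c) # q)"
      using x by (auto simp: SS_mem shiftm_def)
    then show ?thesis by blast
  qed
next
  fix x assume "x \<in> SS A \<union> shiftm A ` SS B"
  then show "x \<in> SS (A + B)" by (auto simp: SS_mem shiftm_def)
qed

lemma SS_plus:
  assumes "iso A' (SS A)" "iso B' (SS B)" "\<forall>x\<in>A'. \<forall>y\<in>B'. \<not> pfx x y \<and> \<not> pfx y x"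
  shows "iso (A' \<union> B') (SS (A + B))"
proof -
  have "iso (SS B) (shiftm A ` SS B)"
    by (rule iso_map) (auto simp: inj_on_def SS_mem shiftm_def)
  with assms(2) have "iso B' (shiftm A ` SS B)" by (rule iso_trans)
  moreover have "\<forall>x\<in>SS A. \<forall>y\<in>shiftm A ` SS B. \<not> pfx x y \<and> \<not> pfx y x"
    by (auto simp: SS_mem shiftm_def)
  ultimately have "iso (A' \<union> B') (SS A \<union> shiftm A ` SS B)"
    using assms(1,3) by (intro iso_union)
  then show ?thesis by (simp add: SS_plus_eq)
qed

definition Mf :: "'b tree list \<Rightarrow> shadow multiset" where
  "Mf ts = mset (map sh (filter (\<lambda>c. c \<noteq> Leaf) ts))"

lemma Mf_Nil[simp]: "Mf [] = {#}" by (simp add: Mf_def)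
lemma Mf_append: "Mf (xs @ ys) = Mf xs + Mf ys" by (simp add: Mf_def)
lemma Mf_Cons: "Mf (t # ts) = (if t = Leaf then Mf ts else {#sh t#} + Mf ts)" by (simp add: Mf_def)
lemma sh_Node': "sh (Node a ts) = Sh (Mf ts)" by (simp add: Mf_def)

definition FN :: "'b tree list \<Rightarrow> nat list set" where
  "FN ts = {i # p | i p. i < length ts \<and> isnode (ts ! i) p}"

lemma inodes_Node: "inodes (Node a ts) = insert [] (FN ts)"
  unfolding inodes_def FN_def by (auto, case_tac x, auto)

lemma Nil_notin_FN[simp]: "[] \<notin> FN ts" by (simp add: FN_def)

definition sucm :: "nat list \<Rightarrow> nat list" where
  "sucm x = (case x of [] \<Rightarrow> [] | i # p \<Rightarrow> Suc i # p)"

lemma iso_sucm: "iso X (sucm ` X)"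
  by (rule iso_map) (auto simp: inj_on_def sucm_def split: list.splits)

lemma FN_Cons: "FN (t # ts) = (#) 0 ` inodes t \<union> sucm ` FN ts"
proof (intro equalityI subsetI)
  fix x assume "x \<in> FN (t # ts)"
  then obtain i p where x: "x = i # p" "i < Suc (length ts)" "isnode ((t # ts) ! i) p" by (auto simp: FN_def)
  show "x \<in> (#) 0 ` inodes t \<union> sucm ` FN ts"
  proof (cases i)
    case 0 then have "p \<in> inodes t" "x = 0 # p" using x by (auto simp: inodes_def)
    then show ?thesis by blast
  next
    case (Suc j)
    then have "j # p \<in> FN ts" "x = sucm (j # p)" using x by (auto simp: FN_def sucm_def)
    then show ?thesis by blast
  qed
next
  fix x assume "x \<in> (#) 0 ` inodes t \<union> sucm ` FN ts"
  then consider p where "x = 0 # p" "isnode t p" | j p where "x = Suc j # p" "j < length ts" "isnode (ts ! j) p"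
    by (auto simp: FN_def inodes_def sucm_def)
  then show "x \<in> FN (t # ts)"
  proof cases
    case 1 then show ?thesis unfolding FN_def by force
  next
    case 2 then show ?thesis unfolding FN_def by force
  qed
qed

lemma incomp_0_suc: "[] \<notin> Y \<Longrightarrow> \<forall>x\<in>(#) 0 ` X. \<forall>y\<in>sucm ` Y. \<not> pfx x y \<and> \<not> pfx y x"
  by (auto simp: sucm_def split: list.splits)

lemma claimF:
  "(\<forall>t\<in>set ts. t \<noteq> Leaf \<longrightarrow> iso (inodes t) (Nd (sh t))) \<Longrightarrow> iso (FN ts) (SS (Mf ts))"
proof (induction ts)
  case Nil
  then show ?case by (simp add: FN_def SS_empty iso_empty)
next
  case (Cons t ts)
  have IH: "iso (sucm ` FN ts) (SS (Mf ts))"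
    using iso_trans[OF iso_sym[OF iso_sucm] Cons.IH] Cons.prems by simp
  show ?case
  proof (cases "t = Leaf")
    case True
    then show ?thesis using IH by (simp add: FN_Cons Mf_Cons inodes_def)
  next
    case False
    have "iso ((#) 0 ` inodes t) (SS {#sh t#})"
      unfolding SS_single
      using iso_trans[OF iso_trans[OF iso_sym[OF iso_cons] ] iso_cons] Cons.prems False by auto
    then show ?thesis unfolding FN_Cons Mf_Cons if_not_P[OF False]
      using IH by (rule SS_plus) (rule incomp_0_suc[OF Nil_notin_FN])
  qed
qed

lemma claimT: "t \<noteq> Leaf \<Longrightarrow> iso (inodes t) (Nd (sh t))"
proof (induction t)
  case (Node a ts)
  have "iso (FN ts) (SS (Mf ts))" using Node.IH by (intro claimF) auto
  then show ?case unfolding inodes_Node sh_Node' Nd_Sh by (intro iso_root) auto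
qed simp



definition FD :: "'a tree list \<Rightarrow> 'a tree list \<Rightarrow> nat list set" where
  "FD ss ts = {i # p | i p. i < length ss \<and> i < length ts \<and> isnode (ts ! i) p \<and> \<not> isnode (ss ! i) p}"

lemma Nil_notin_FD[simp]: "[] \<notin> FD ss ts" by (simp add: FD_def)

lemma inodes_diff_Node: "length ss = length ts \<Longrightarrow> inodes (Node b ts) - inodes (Node a ss) = FD ss ts"
  unfolding inodes_def FD_def by (auto, case_tac x, auto)

lemma FD_Cons: "FD (s # ss) (t # ts) = (#) 0 ` (inodes t - inodes s) \<union> sucm ` FD ss ts"
proof (intro equalityI subsetI)
  fix x assume "x \<in> FD (s # ss) (t # ts)"
  then obtain i p where x: "x = i # p" "i < Suc (length ss)" "i < Suc (length ts)"
    "isnode ((t # ts) ! i) p" "\<not> isnode ((s # ss) ! i) p" by (auto simp: FD_def)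
  show "x \<in> (#) 0 ` (inodes t - inodes s) \<union> sucm ` FD ss ts"
  proof (cases i)
    case 0 then have "p \<in> inodes t - inodes s" "x = 0 # p" using x by (auto simp: inodes_def)
    then show ?thesis by blast
  next
    case (Suc j)
    then have "j # p \<in> FD ss ts" "x = sucm (j # p)" using x by (auto simp: FD_def sucm_def)
    then show ?thesis by blast
  qed
next
  fix x assume "x \<in> (#) 0 ` (inodes t - inodes s) \<union> sucm ` FD ss ts"
  then consider p where "x = 0 # p" "isnode t p" "\<not> isnode s p"
    | j p where "x = Suc j # p" "j < length ss" "j < length ts" "isnode (ts ! j) p" "\<not> isnode (ss ! j) p"
    by (auto simp: FD_def inodes_def sucm_def)
  then show "x \<in> FD (s # ss) (t # ts)"
  proof cases
    case 1 then show ?thesis unfolding FD_def by force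
  next
    case 2 then show ?thesis unfolding FD_def by force
  qed
qed

lemma claimD:
  fixes s t :: "'a tree" and ss ts :: "'a tree list"
  shows "pre s t \<Longrightarrow> iso (inodes t - inodes s) (SS (Mf (tcut s t)))"
    "list_all2 pre ss ts \<Longrightarrow> iso (FD ss ts) (SS (Mf (cut_list ss ts)))"
proof (induction s t and ss ts rule: tcut_cut_list.induct)
  case (1 t)
  show ?case
  proof (cases "t = Leaf")
    case True
    then show ?thesis by (simp add: inodes_def Mf_Cons SS_empty iso_empty)
  next
    case False
    have "iso (inodes t) (SS {#sh t#})"
      unfolding SS_single using iso_trans[OF claimT[OF False] iso_cons] .
    then show ?thesis using False by (simp add: inodes_def Mf_Cons)
  qed
next
  case (3 a ss b ts)
  then have "list_all2 pre ss ts" "length ss = length ts" by (auto simp: list_all2_lengthD)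
  then show ?case using 3 by (simp add: inodes_diff_Node)
next
  case (4 ts)
  then show ?case by (simp add: FD_def SS_empty iso_empty)
next
  case (6 s ss t ts)
  then have h: "pre s t" "list_all2 pre ss ts" by auto
  have i1: "iso ((#) 0 ` (inodes t - inodes s)) (SS (Mf (tcut s t)))"
    using iso_trans[OF iso_sym[OF iso_cons] 6(1)[OF h(1)]] .
  have i2: "iso (sucm ` FD ss ts) (SS (Mf (cut_list ss ts)))"
    using iso_trans[OF iso_sym[OF iso_sucm] 6(2)[OF h(2)]] .
  show ?case unfolding FD_Cons cut_list.simps Mf_append
    using i1 i2 by (rule SS_plus) (rule incomp_0_suc[OF Nil_notin_FD])
qed auto

lemma map_tree_Leaf_iff[simp]: "map_tree g c = Leaf \<longleftrightarrow> c = Leaf"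
  by (cases c) auto

lemma sh_map_tree: "sh (map_tree g t) = sh t"
proof (induction t)
  case (Node a ts)
  have "map sh (filter (\<lambda>c. c \<noteq> Leaf) (map (map_tree g) ts)) = map sh (filter (\<lambda>c. c \<noteq> Leaf) ts)"
    using Node.IH by (induction ts) auto
  then show ?case by simp
qed simp

lemma Ps_diamond: "Ps_carrier (sh (diamond rs)) = SS (Mf rs)"
proof -
  have "map sh (filter (\<lambda>c. c \<noteq> Leaf) (map (map_tree Some) rs)) = map sh (filter (\<lambda>c. c \<noteq> Leaf) rs)"
    by (induction rs) (auto simp: sh_map_tree)
  then show ?thesis by (simp add: diamond_def SS_def Mf_def)
qed

lemma ideals_bij:
  assumes f: "bij_betw f A B" and o: "\<forall>x\<in>A. \<forall>y\<in>A. pfx x y \<longleftrightarrow> pfx (f x) (f y)"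
  shows "bij_betw (image f) (order_ideals A pfx) (order_ideals B pfx)"
  unfolding bij_betw_def
proof (intro conjI)
  have inj: "inj_on f A" and im: "f ` A = B" using f by (auto simp: bij_betw_def)
  have "inj_on (image f) (Pow A)" using inj by (rule inj_on_image_Pow)
  then show "inj_on (image f) (order_ideals A pfx)"
    by (rule inj_on_subset) (auto simp: order_ideals_def)
  show "image f ` order_ideals A pfx = order_ideals B pfx"
  proof (intro equalityI subsetI)
    fix J assume "J \<in> image f ` order_ideals A pfx"
    then obtain I where I: "I \<subseteq> A" "\<forall>x\<in>I. \<forall>y\<in>A. pfx y x \<longrightarrow> y \<in> I" "J = f ` I"
      by (auto simp: order_ideals_def)
    have "\<forall>x\<in>J. \<forall>y\<in>B. pfx y x \<longrightarrow> y \<in> J"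
    proof (intro ballI impI)
      fix x y assume "x \<in> J" "y \<in> B" "pfx y x"
      then obtain x0 y0 where "x0 \<in> I" "x = f x0" "y0 \<in> A" "y = f y0" using I im by auto
      then show "y \<in> J" using I o \<open>pfx y x\<close> by auto
    qed
    then show "J \<in> order_ideals B pfx" using I im by (auto simp: order_ideals_def)
  next
    fix J assume J: "J \<in> order_ideals B pfx"
    define I where "I = {x\<in>A. f x \<in> J}"
    have "J = f ` I" using J im by (auto simp: I_def order_ideals_def)
    moreover have "I \<in> order_ideals A pfx"
      using J o by (auto simp: I_def order_ideals_def im[symmetric])
    ultimately show "J \<in> image f ` order_ideals A pfx" by blast
  qed
qed



lemma inj_image_subset_iff: "inj_on f C \<Longrightarrow> A \<subseteq> C \<Longrightarrow> B \<subseteq> C \<Longrightarrow> f ` A \<subseteq> f ` B \<longleftrightarrow> A \<subseteq> B"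
proof
  assume inj: "inj_on f C" and A: "A \<subseteq> C" and B: "B \<subseteq> C" and sub: "f ` A \<subseteq> f ` B"
  show "A \<subseteq> B"
  proof
    fix x assume "x \<in> A"
    then have "f x \<in> f ` B" "x \<in> C" using sub A by auto
    then show "x \<in> B" using inj_on_image_mem_iff[OF inj _ B] by blast
  qed
qed auto

lemma inodes_mono: "pre u v \<Longrightarrow> inodes u \<subseteq> inodes v"
  using pre_inodes by (auto simp: inodes_def)

lemma interval_bij:
  assumes st: "pre s t"
  shows "bij_betw (\<lambda>u. inodes u - inodes s) {u. pre s u \<and> pre u t} (order_ideals (inodes t - inodes s) pfx)"
  unfolding bij_betw_def
proof (intro conjI)
  show "inj_on (\<lambda>u. inodes u - inodes s) {u. pre s u \<and> pre u t}"
  proof (rule inj_onI)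
    fix u v assume u: "u \<in> {u. pre s u \<and> pre u t}" and v: "v \<in> {u. pre s u \<and> pre u t}"
      and e: "inodes u - inodes s = inodes v - inodes s"
    have "inodes s \<subseteq> inodes u" "inodes s \<subseteq> inodes v" using u v inodes_mono by auto
    with e have "inodes u = inodes v" by blast
    then have "restrict t (inodes u) = restrict t (inodes v)" by simp
    moreover have "restrict t (inodes u) = u" "restrict t (inodes v) = v" using restrict_inodes u v by auto
    ultimately show "u = v" by simp
  qed
  show "(\<lambda>u. inodes u - inodes s) ` {u. pre s u \<and> pre u t} = order_ideals (inodes t - inodes s) pfx"
  proof (intro equalityI subsetI)
    fix I assume "I \<in> (\<lambda>u. inodes u - inodes s) ` {u. pre s u \<and> pre u t}"
    then obtain u where u: "pre s u" "pre u t" "I = inodes u - inodes s" by auto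
    have "I \<subseteq> inodes t - inodes s" using u inodes_mono by auto
    moreover have "\<forall>x\<in>I. \<forall>y\<in>inodes t - inodes s. pfx y x \<longrightarrow> y \<in> I"
    proof (intro ballI impI)
      fix x y assume "x \<in> I" "y \<in> inodes t - inodes s" "pfx y x"
      then obtain q where "x = y @ q" "isnode u (y @ q)" "\<not> isnode s y" using u by (auto simp: pfx_def inodes_def)
      then have "isnode u y" by (blast intro: isnode_prefix)
      then show "y \<in> I" using u(3) \<open>\<not> isnode s y\<close> by (auto simp: inodes_def)
    qed
    ultimately show "I \<in> order_ideals (inodes t - inodes s) pfx" by (simp add: order_ideals_def)
  next
    fix I assume I: "I \<in> order_ideals (inodes t - inodes s) pfx"
    then have I1: "I \<subseteq> inodes t - inodes s" and I2: "\<forall>x\<in>I. \<forall>y\<in>inodes t - inodes s. pfx y x \<longrightarrow> y \<in> I"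
      by (auto simp: order_ideals_def)
    define S where "S = inodes s \<union> I"
    have S1: "S \<subseteq> inodes t" using I1 inodes_mono[OF st] by (auto simp: S_def)
    have S2: "\<forall>p q. p @ q \<in> S \<longrightarrow> p \<in> S"
    proof (intro allI impI)
      fix p q assume pq: "p @ q \<in> S"
      show "p \<in> S"
      proof (cases "p @ q \<in> inodes s")
        case True then have "isnode s (p @ q)" by (simp add: inodes_def)
        then have "isnode s p" by (rule isnode_prefix)
        then show ?thesis by (simp add: S_def inodes_def)
      next
        case False
        then have "p @ q \<in> I" using pq by (auto simp: S_def)
        moreover have "isnode t (p @ q)" using S1 pq by (auto simp: inodes_def)
        then have "p \<in> inodes t" using isnode_prefix by (simp add: inodes_def) blast
        ultimately show ?thesis using I2 by (auto simp: S_def pfx_def)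
      qed
    qed
    define u where "u = restrict t S"
    have u: "pre u t" "inodes u = S" using restrict_pre[OF S1 S2] by (auto simp: u_def)
    have "pre s u" using pre_of_inodes[OF st u(1)] u(2) by (auto simp: S_def inodes_def)
    moreover have "I = inodes u - inodes s" using u(2) I1 by (auto simp: S_def)
    ultimately show "I \<in> (\<lambda>u. inodes u - inodes s) ` {u. pre s u \<and> pre u t}" using u(1) by blast
  qed
qed

theorem proposition3p10:
  fixes G :: "'a set" and ar :: "'a \<Rightarrow> nat" and s t :: "'a tree"
  assumes "finite G"
    and "\<forall>a\<in>G. ar a \<ge> 1"
    and "gtree G ar s" and "gtree G ar t"
    and "gprefix G ar s t"
  shows "\<exists>f. bij_betw f {u. gtree G ar u \<and> gprefix G ar s u \<and> gprefix G ar u t}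
                 (order_ideals (Ps_carrier (sh (diamond (tree_diff t s)))) Ps_le)
          \<and> (\<forall>x\<in>{u. gtree G ar u \<and> gprefix G ar s u \<and> gprefix G ar u t}.
             \<forall>y\<in>{u. gtree G ar u \<and> gprefix G ar s u \<and> gprefix G ar u t}.
               (gprefix G ar x y \<longleftrightarrow> f x \<subseteq> f y)
             \<and> f (tmeet x y) = f x \<inter> f y
             \<and> f (tjoin x y) = f x \<union> f y)"
proof -
  have st: "pre s t" using assms(5) by (rule gprefix_pre)
  have Int: "{u. gtree G ar u \<and> gprefix G ar s u \<and> gprefix G ar u t} = {u. pre s u \<and> pre u t}"
    using gprefix_pre pre_gprefix gtree_pre assms(4) by metis
  have P: "Ps_carrier (sh (diamond (tree_diff t s))) = SS (Mf (tcut s t))"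
    using tree_diff_cut[OF st] Ps_diamond by simp
  define D where "D = inodes t - inodes s"
  have "iso D (SS (Mf (tcut s t)))" unfolding D_def using claimD(1)[OF st] .
  then obtain \<phi> where phi: "bij_betw \<phi> D (SS (Mf (tcut s t)))" "\<forall>x\<in>D. \<forall>y\<in>D. pfx x y \<longleftrightarrow> pfx (\<phi> x) (\<phi> y)"
    by (auto simp: iso_def)
  have injphi: "inj_on \<phi> D" using phi(1) by (auto simp: bij_betw_def)
  define f where "f = (\<lambda>u::'a tree. \<phi> ` (inodes u - inodes s))"
  have "bij_betw (image \<phi> \<circ> (\<lambda>u. inodes u - inodes s)) {u. pre s u \<and> pre u t} (order_ideals (SS (Mf (tcut s t))) pfx)"
    using interval_bij[OF st] ideals_bij[OF phi] unfolding D_def by (rule bij_betw_trans)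
  then have bij: "bij_betw f {u. pre s u \<and> pre u t} (order_ideals (SS (Mf (tcut s t))) pfx)"
    by (simp add: f_def comp_def)
  have props: "(gprefix G ar x y \<longleftrightarrow> f x \<subseteq> f y) \<and> f (tmeet x y) = f x \<inter> f y \<and> f (tjoin x y) = f x \<union> f y"
    if x: "pre s x" "pre x t" and y: "pre s y" "pre y t" for x y
  proof -
    have sx: "inodes s \<subseteq> inodes x" "inodes s \<subseteq> inodes y" using x y inodes_mono by auto
    have Dx: "inodes x - inodes s \<subseteq> D" "inodes y - inodes s \<subseteq> D" using x y inodes_mono by (auto simp: D_def)
    have "gprefix G ar x y \<longleftrightarrow> pre x y"
      using gprefix_pre pre_gprefix gtree_pre[OF y(2) assms(4)] by metis
    also have "\<dots> \<longleftrightarrow> inodes x \<subseteq> inodes y"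
      using pre_of_inodes[OF x(2) y(2)] inodes_mono by (auto simp: inodes_def)
    also have "\<dots> \<longleftrightarrow> inodes x - inodes s \<subseteq> inodes y - inodes s" using sx by blast
    also have "\<dots> \<longleftrightarrow> f x \<subseteq> f y" unfolding f_def using inj_image_subset_iff[OF injphi Dx] by simp
    finally have 1: "gprefix G ar x y \<longleftrightarrow> f x \<subseteq> f y" .
    have m: "inodes (tmeet x y) = inodes x \<inter> inodes y" using tmeet_pre[OF x(2) y(2)] by (auto simp: inodes_def)
    have e: "inodes x \<inter> inodes y - inodes s = (inodes x - inodes s) \<inter> (inodes y - inodes s)" by blast
    have 2: "f (tmeet x y) = f x \<inter> f y" unfolding f_def m e
      using inj_on_image_Int[OF injphi Dx] by simp
    have j: "inodes (tjoin x y) = inodes x \<union> inodes y" using tjoin_pre[OF x(2) y(2)] by (auto simp: inodes_def)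
    have 3: "f (tjoin x y) = f x \<union> f y" unfolding f_def j by (simp add: Un_Diff image_Un)
    show ?thesis using 1 2 3 by blast
  qed
  show ?thesis unfolding Int P Ps_le_pfx
    using bij props by blast
qed


end
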